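(* Let $\mathcal{S}$ be a state space, $\mathcal{A}$ a finite action space, $\rho$ a distribution on $\mathcal{S}$, $\pi_{\mathrm{ref}}$ a full-support policy, $\beta>0$, $R>0$, $r^*:\mathcal{S}\times\mathcal{A}\to[0,R]$, and let $\Pi$ be a finite policy class with $\pi^*_{r^*}\in\Pi$ and $|\log(\pi(a|s)/\pi_{\mathrm{ref}}(a|s))|\le R/\beta$ for all $\pi\in\Pi$ and all $(s,a)$. Then for any bounded reward model $r:\mathcal{S}\times\mathcal{A}\to\mathbb{R}$ with associated optimal policy $\pi^*_r$, $$\mathrm{Cov}^{\pi^*_{r^*}|\pi^*_r}\le\min_{b\in\mathbb{R}}\mathbb{E}_{s\sim\rho}\Big[\mathbb{E}^2_{a\sim\pi^*_{r^*}(\cdot|s)}\Big[\exp\Big(\frac{|r^*(s,a)-r(s,a)-b|}{\beta}\Big)\Big]\Big].$$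
   Context: For a reward $r$, $\pi^*_r(a|s):=\pi_{\mathrm{ref}}(a|s)e^{r(s,a)/\beta}/\sum_{a'}\pi_{\mathrm{ref}}(a'|s)e^{r(s,a')/\beta}$ (the maximizer of $\mathbb{E}_{s\sim\rho}[\mathbb{E}_{a\sim\pi}r(s,a)-\beta\mathrm{KL}(\pi(\cdot|s)\|\pi_{\mathrm{ref}}(\cdot|s))]$). $\mathrm{Cov}^{\tilde\pi|\pi}:=\mathbb{E}_{s\sim\rho,a\sim\tilde\pi(\cdot|s)}[\tilde\pi(a|s)/\pi(a|s)]$. $\mathbb{E}^2[\cdot]$ denotes the square of the expectation. *)

theory Defs
  imports "HOL-Probability.Probability"
begin

definition is_policy :: "('s \<Rightarrow> 'a::finite \<Rightarrow> real) \<Rightarrow> bool" where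
  "is_policy \<pi> \<longleftrightarrow> (\<forall>s. (\<forall>a. 0 \<le> \<pi> s a) \<and> (\<Sum>a\<in>UNIV. \<pi> s a) = 1)"

definition opt_policy ::
  "('s \<Rightarrow> 'a::finite \<Rightarrow> real) \<Rightarrow> real \<Rightarrow> ('s \<Rightarrow> 'a \<Rightarrow> real) \<Rightarrow> 's \<Rightarrow> 'a \<Rightarrow> real" where
  "opt_policy \<pi>ref \<beta> r s a =
     \<pi>ref s a * exp (r s a / \<beta>) / (\<Sum>a'\<in>UNIV. \<pi>ref s a' * exp (r s a' / \<beta>))"

definition Cov ::
  "'s measure \<Rightarrow> ('s \<Rightarrow> 'a::finite \<Rightarrow> real) \<Rightarrow> ('s \<Rightarrow> 'a \<Rightarrow> real) \<Rightarrow> real" where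
  "Cov \<rho> \<pi>t \<pi> = (\<integral>s. (\<Sum>a\<in>UNIV. \<pi>t s a * (\<pi>t s a / \<pi> s a)) \<partial>\<rho>)"

end

theory Submission
  imports Defs
begin

lemma pointwise:
  fixes w x y :: "'a::finite \<Rightarrow> real" and \<beta> b :: real
  assumes wpos: "\<And>a. 0 < w a" and beta: "0 < \<beta>"
  defines "Z1 \<equiv> (\<Sum>a\<in>UNIV. w a * exp (x a / \<beta>))"
  defines "Z2 \<equiv> (\<Sum>a\<in>UNIV. w a * exp (y a / \<beta>))"
  defines "P \<equiv> (\<lambda>a. w a * exp (x a / \<beta>) / Z1)"
  defines "Q \<equiv> (\<lambda>a. w a * exp (y a / \<beta>) / Z2)"
  shows "(\<Sum>a\<in>UNIV. P a * (P a / Q a)) \<le> (\<Sum>a\<in>UNIV. P a * exp (\<bar>x a - y a - b\<bar> / \<beta>))\<^sup>2"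
proof -
  define d where "d = (\<lambda>a. (x a - y a - b) / \<beta>)"
  have Z1pos: "Z1 > 0" unfolding Z1_def
    by (intro sum_pos) (auto intro: wpos mult_pos_pos)
  have Z2pos: "Z2 > 0" unfolding Z2_def
    by (intro sum_pos) (auto intro: wpos mult_pos_pos)
  have Ppos: "P a > 0" for a using Z1pos wpos[of a] unfolding P_def by simp
  define S where "S = (\<Sum>a\<in>UNIV. P a * exp (- d a))"
  have "(\<Sum>a\<in>UNIV. P a * exp (- d a)) = (\<Sum>a\<in>UNIV. exp (b / \<beta>) * (w a * exp (y a / \<beta>) / Z1))"
  proof (rule sum.cong[OF refl])
    fix a
    have "exp (- d a) = exp (b / \<beta>) * exp (y a / \<beta>) / exp (x a / \<beta>)"
      unfolding d_def using beta by (simp add: exp_add[symmetric] exp_diff[symmetric] field_simps)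
    then show "P a * exp (- d a) = exp (b / \<beta>) * (w a * exp (y a / \<beta>) / Z1)"
      unfolding P_def by simp
  qed
  also have "\<dots> = exp (b / \<beta>) * Z2 / Z1"
    unfolding Z2_def by (simp add: sum_distrib_left sum_divide_distrib)
  finally have S_eq: "S = exp (b / \<beta>) * Z2 / Z1" unfolding S_def .
  have ratio: "P a / Q a = exp (d a) * S" for a
  proof -
    have "exp (d a) = exp (x a / \<beta>) / (exp (y a / \<beta>) * exp (b / \<beta>))"
      unfolding d_def using beta by (simp add: exp_add[symmetric] exp_diff[symmetric] field_simps)
    then show ?thesis unfolding S_eq P_def Q_def using Z1pos Z2pos wpos[of a]
      by (simp add: field_simps)
  qed
  define T where "T = (\<Sum>a\<in>UNIV. P a * exp (\<bar>x a - y a - b\<bar> / \<beta>))"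
  have ab1: "- (t / \<beta>) \<le> \<bar>t\<bar> / \<beta>" for t
    using divide_right_mono[of "-t" "\<bar>t\<bar>" \<beta>] beta by simp
  have ab2: "t / \<beta> \<le> \<bar>t\<bar> / \<beta>" for t
    using divide_right_mono[of "t" "\<bar>t\<bar>" \<beta>] beta by simp
  have ST: "S \<le> T" unfolding S_def T_def d_def
    using Ppos ab1 by (intro sum_mono mult_left_mono) (auto simp: less_imp_le)
  have S0: "0 \<le> S" unfolding S_def using Ppos by (intro sum_nonneg) (simp add: less_imp_le)
  have "(\<Sum>a\<in>UNIV. P a * (P a / Q a)) = (\<Sum>a\<in>UNIV. P a * exp (d a)) * S"
    by (simp add: ratio sum_distrib_right mult.assoc)
  also have "\<dots> \<le> T * S" unfolding T_def d_def
    using Ppos ab2 S0 by (intro mult_right_mono sum_mono mult_left_mono) (auto simp: less_imp_le)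
  also have "\<dots> \<le> T * T" using ST S0 by (intro mult_left_mono) (auto intro: order_trans)
  finally show ?thesis unfolding T_def by (simp add: power2_eq_square)
qed
theorem lemmaE5:
  fixes \<rho> :: "'s measure"
    and \<pi>ref :: "'s \<Rightarrow> 'a::finite \<Rightarrow> real"
    and \<beta> R :: real
    and rstar r :: "'s \<Rightarrow> 'a \<Rightarrow> real"
    and PiC :: "('s \<Rightarrow> 'a \<Rightarrow> real) set"
  assumes rho: "prob_space \<rho>"
    and ref_pol: "is_policy \<pi>ref"
    and ref_full: "\<forall>s a. 0 < \<pi>ref s a"
    and ref_meas: "\<forall>a. (\<lambda>s. \<pi>ref s a) \<in> borel_measurable \<rho>"
    and beta: "0 < \<beta>"
    and Rpos: "0 < R"
    and rstar_range: "\<forall>s a. 0 \<le> rstar s a \<and> rstar s a \<le> R"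
    and rstar_meas: "\<forall>a. (\<lambda>s. rstar s a) \<in> borel_measurable \<rho>"
    and Pi_fin: "finite PiC"
    and Pi_pol: "\<forall>\<pi>\<in>PiC. is_policy \<pi>"
    and opt_in: "opt_policy \<pi>ref \<beta> rstar \<in> PiC"
    and Pi_bound: "\<forall>\<pi>\<in>PiC. \<forall>s a. 0 < \<pi> s a \<and> \<bar>ln (\<pi> s a / \<pi>ref s a)\<bar> \<le> R / \<beta>"
    and r_bdd: "\<exists>B. \<forall>s a. \<bar>r s a\<bar> \<le> B"
    and r_meas: "\<forall>a. (\<lambda>s. r s a) \<in> borel_measurable \<rho>"
  shows "Cov \<rho> (opt_policy \<pi>ref \<beta> rstar) (opt_policy \<pi>ref \<beta> r)
    \<le> (INF b::real. \<integral>s. (\<Sum>a\<in>UNIV. opt_policy \<pi>ref \<beta> rstar s a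
                 * exp (\<bar>rstar s a - r s a - b\<bar> / \<beta>))\<^sup>2 \<partial>\<rho>)"
proof -
  interpret P: prob_space \<rho> by (rule rho)
  note [measurable] = ref_meas[rule_format] rstar_meas[rule_format] r_meas[rule_format]
  obtain B where B: "\<And>s a. \<bar>r s a\<bar> \<le> B" using r_bdd by blast
  let ?ps = "opt_policy \<pi>ref \<beta> rstar" and ?p = "opt_policy \<pi>ref \<beta> r"
  have ps_nn: "0 \<le> ?ps s a" for s a
    unfolding opt_policy_def using ref_full
    by (intro divide_nonneg_nonneg sum_nonneg) (auto simp: less_imp_le)
  have ps_le1: "?ps s a \<le> 1" for s a
  proof -
    have "?ps s a = \<pi>ref s a * exp (rstar s a / \<beta>) / (\<Sum>a'\<in>UNIV. \<pi>ref s a' * exp (rstar s a' / \<beta>))"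
      by (simp add: opt_policy_def)
    also have "\<dots> \<le> 1"
    proof -
      have "\<pi>ref s a * exp (rstar s a / \<beta>) \<le> (\<Sum>a'\<in>UNIV. \<pi>ref s a' * exp (rstar s a' / \<beta>))"
        using ref_full by (intro member_le_sum) (auto simp: less_imp_le)
      moreover have "0 < \<pi>ref s a * exp (rstar s a / \<beta>)" using ref_full by simp
      ultimately show ?thesis by simp
    qed
    finally show ?thesis .
  qed
  show ?thesis
  proof (rule cINF_greatest)
    show "UNIV \<noteq> {}" by simp
    fix b :: real
    define f where "f = (\<lambda>s. (\<Sum>a\<in>UNIV. ?ps s a * exp (\<bar>rstar s a - r s a - b\<bar> / \<beta>))\<^sup>2)"
    define g where "g = (\<lambda>s. (\<Sum>a\<in>UNIV. ?ps s a * (?ps s a / ?p s a)))"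
    have fm: "f \<in> borel_measurable \<rho>" unfolding f_def opt_policy_def by measurable
    have gm: "g \<in> borel_measurable \<rho>" unfolding g_def opt_policy_def by measurable
    have gf: "g s \<le> f s" for s
      unfolding f_def g_def opt_policy_def
      by (rule pointwise) (use ref_full beta in auto)
    have g0: "0 \<le> g s" for s
      unfolding g_def using ps_nn
      by (intro sum_nonneg mult_nonneg_nonneg divide_nonneg_nonneg)
         (auto simp: opt_policy_def ref_full less_imp_le intro!: divide_nonneg_nonneg sum_nonneg mult_nonneg_nonneg)
    define K where "K = (real CARD('a) * exp ((R + B + \<bar>b\<bar>) / \<beta>))\<^sup>2"
    have fK: "norm (f s) \<le> K" for s
    proof -
      have "(\<Sum>a\<in>UNIV. ?ps s a * exp (\<bar>rstar s a - r s a - b\<bar> / \<beta>))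
            \<le> (\<Sum>a\<in>(UNIV::'a set). exp ((R + B + \<bar>b\<bar>) / \<beta>))"
      proof (rule sum_mono)
        fix a
        have "\<bar>rstar s a - r s a - b\<bar> \<le> R + B + \<bar>b\<bar>"
          using rstar_range B[of s a] by (smt (verit))
        then have "exp (\<bar>rstar s a - r s a - b\<bar> / \<beta>) \<le> exp ((R + B + \<bar>b\<bar>) / \<beta>)"
          using beta by (simp add: divide_right_mono)
        then show "?ps s a * exp (\<bar>rstar s a - r s a - b\<bar> / \<beta>) \<le> exp ((R + B + \<bar>b\<bar>) / \<beta>)"
          using ps_nn[of s a] ps_le1[of s a]
          by (metis exp_ge_zero mult_left_le_one_le mult_mono order_trans mult_1_left)
      qed
      moreover have "0 \<le> (\<Sum>a\<in>UNIV. ?ps s a * exp (\<bar>rstar s a - r s a - b\<bar> / \<beta>))"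
        using ps_nn by (intro sum_nonneg) auto
      ultimately show ?thesis unfolding f_def K_def
        by (simp add: power_mono)
    qed
    have fi: "integrable \<rho> f"
      by (rule P.integrable_const_bound[where B=K]) (use fK fm in auto)
    have gi: "integrable \<rho> g"
      by (rule Bochner_Integration.integrable_bound[OF fi gm]) (use gf g0 in \<open>auto intro!: AE_I2 order_trans[OF _ abs_ge_self]\<close>)
    have "integral\<^sup>L \<rho> g \<le> integral\<^sup>L \<rho> f"
      by (rule integral_mono[OF gi fi gf])
    then show "Cov \<rho> ?ps ?p \<le> (\<integral>s. (\<Sum>a\<in>UNIV. ?ps s a * exp (\<bar>rstar s a - r s a - b\<bar> / \<beta>))\<^sup>2 \<partial>\<rho>)"
      unfolding Cov_def f_def g_def .
  qed
qed

end
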